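(* Let $n\geq7$ and let $u,u',v,v'$ be monomials such that $x_{n-1}u,x_{n-1}u'\in\mathcal A$ and $x_nv,x_nv'\in\mathcal C$. If $uv>_{\mathcal R}u'v'$ in $F(J(P_{n-2})^2)$, then $x_{n-1}x_nuv>_{\mathcal R}x_{n-1}x_nu'v'$ in $F(J(P_n)^2)$.
   Context: For $m\geq 1$, $P_m$ is the path graph on vertices $x_1,\ldots,x_m$ with edges $\{x_i,x_{i+1}\}$; $J(P_m)$ is its cover ideal (generated by $\prod_{x\in C}x$, $C$ a minimal vertex cover); $G(I)$ denotes minimal monomial generators and $F(I^2)=\{ab:a,b\in G(I)\}$. The rooted list $\mathcal R(P_m)$: $\mathcal R(P_1)$ empty; $\mathcal R(P_2)=x_1,x_2$; $\mathcal R(P_3)=x_2,x_1x_3$; $\mathcal R(P_4)=x_1x_3,x_2x_3,x_2x_4$; for $m\geq5$, if $\mathcal R(P_{m-2})=u_1,\ldots,u_r$ and $\mathcal R(P_{m-3})=v_1,\ldots,v_s$, then $\mathcal R(P_m)=x_{m-1}u_1,\ldots,x_{m-1}u_r,x_mx_{m-2}v_1,\ldots,x_mx_{m-2}v_s$; it lists each element of $G(J(P_m))$ once. With $\mathcal R(P_m)=u_1,\ldots,u_q$, each $M\in F(J(P_m)^2)$ is $u_1^{a_1}\cdots u_q^{a_q}$ with $a_i\geq0$, $\sum a_i=2$; its maximal expression is the one with lexicographically largest exponent vector, and $M>_{\mathcal R}N$ on $F(J(P_m)^2)$ iff the maximal-expression exponent vector of $M$ is lexicographically larger than that of $N$. For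 $n\geq7$: $\mathcal A$ is the sublist of $\mathcal R(P_n)$ of elements divisible by $x_{n-1}x_{n-3}$ (equivalently $x_{n-1}x_{n-3}w$, $w\in\mathcal R(P_{n-4})$), and $\mathcal C$ is the sublist of elements divisible by $x_nx_{n-4}$ (equivalently $x_nx_{n-2}x_{n-4}w$, $w\in\mathcal R(P_{n-5})$). *)

theory Defs
  imports Main "HOL-Library.Multiset"
begin

text \<open>Monomials in the variables x_1, x_2, ... are represented as finite multisets
  of variable indices: the monomial x_1^2 x_3 is {#1,1,3#}; the product of monomials
  is multiset sum and divisibility is sub-multiset inclusion.\<close>

type_synonym monomial = "nat multiset"

text \<open>The rooted list R(P_m) of minimal generators of the cover ideal J(P_m).\<close>
fun rooted :: "nat \<Rightarrow> monomial list" where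
  "rooted 0 = []"
| "rooted (Suc 0) = []"
| "rooted (Suc (Suc 0)) = [{#1#}, {#2#}]"
| "rooted (Suc (Suc (Suc 0))) = [{#2#}, {#1, 3#}]"
| "rooted (Suc (Suc (Suc (Suc 0)))) = [{#1, 3#}, {#2, 3#}, {#2, 4#}]"
| "rooted (Suc (Suc (Suc (Suc (Suc k))))) =
     (let m = k + 5 in
        map (\<lambda>u. add_mset (m - 1) u) (rooted (m - 2))
        @ map (\<lambda>v. add_mset m (add_mset (m - 2) v)) (rooted (m - 3)))"

definition F2 :: "nat \<Rightarrow> monomial set" where
  "F2 m = {a + b | a b. a \<in> set (rooted m) \<and> b \<in> set (rooted m)}"

definition eval_exp :: "monomial list \<Rightarrow> nat list \<Rightarrow> monomial" where
  "eval_exp R a = sum_list (map2 (\<lambda>k u. repeat_mset k u) a R)"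

definition expressions :: "monomial list \<Rightarrow> monomial \<Rightarrow> nat list set" where
  "expressions R M = {a. length a = length R \<and> sum_list a = 2 \<and> eval_exp R a = M}"

definition max_expression :: "monomial list \<Rightarrow> monomial \<Rightarrow> nat list" where
  "max_expression R M =
     (THE a. a \<in> expressions R M \<and> (\<forall>b \<in> expressions R M. b = a \<or> ord_class.lexordp b a))"

definition R_greater :: "nat \<Rightarrow> monomial \<Rightarrow> monomial \<Rightarrow> bool" where
  "R_greater m M N \<longleftrightarrow> M \<in> F2 m \<and> N \<in> F2 m \<and>
     ord_class.lexordp (max_expression (rooted m) N) (max_expression (rooted m) M)"

definition A_list :: "nat \<Rightarrow> monomial list" where
  "A_list n = filter (\<lambda>w. {#n - 1, n - 3#} \<subseteq># w) (rooted n)"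

definition C_list :: "nat \<Rightarrow> monomial list" where
  "C_list n = filter (\<lambda>w. {#n, n - 4#} \<subseteq># w) (rooted n)"

end

theory Submission imports Defs "HOL-Library.Product_Lexorder" begin

definition vec :: "nat \<Rightarrow> nat \<Rightarrow> nat \<Rightarrow> nat list" where
  "vec q i j = map (\<lambda>k. (if k = i then 1 else 0) + (if k = j then 1 else 0)) [0..<q]"

definition PP :: "monomial list \<Rightarrow> monomial \<Rightarrow> (nat \<times> nat) set" where
  "PP R M = {(i,j). i \<le> j \<and> j < length R \<and> R!i + R!j = M}"

lemma vec_nth[simp]: "k < q \<Longrightarrow> vec q i j ! k = (if k = i then 1 else 0) + (if k = j then 1 else 0)"
  by (simp add: vec_def)
lemma vec_len[simp]: "length (vec q i j) = q" by (simp add: vec_def)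

lemma eval_exp_nth: "length a = length R \<Longrightarrow> eval_exp R a = (\<Sum>k<length R. repeat_mset (a!k) (R!k))"
  unfolding eval_exp_def
  by (simp add: sum_list_sum_nth lessThan_atLeast0)

lemma sum_list0: "sum_list (xs::nat list) = 0 \<Longrightarrow> k < length xs \<Longrightarrow> xs!k = 0"
  by (simp add: sum_list_eq_0_iff)

lemma sum_list1: "sum_list (xs::nat list) = 1 \<Longrightarrow> \<exists>j<length xs. \<forall>k<length xs. xs!k = (if k = j then 1 else 0)"
proof (induction xs)
  case Nil then show ?case by simp
next
  case (Cons x xs)
  show ?case
  proof (cases x)
    case 0
    with Cons obtain j where "j < length xs" "\<forall>k<length xs. xs!k = (if k = j then 1 else 0)" by auto
    then show ?thesis using 0 by (intro exI[of _ "Suc j"]) (auto simp: nth_Cons split: nat.splits)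
  next
    case (Suc y)
    then have "x = 1" "sum_list xs = 0" using Cons.prems by auto
    then show ?thesis using sum_list0 by (intro exI[of _ 0]) (auto simp: nth_Cons split: nat.splits)
  qed
qed

lemma sum_list2: "sum_list (xs::nat list) = 2 \<Longrightarrow> \<exists>i j. i \<le> j \<and> j < length xs \<and> xs = vec (length xs) i j"
proof (induction xs)
  case Nil then show ?case by simp
next
  case (Cons x xs)
  have x: "x = 0 \<or> x = 1 \<or> x = 2" using Cons.prems by auto
  show ?case
  proof -
    { assume x0: "x = 0"
      with Cons obtain i j where ij: "i \<le> j" "j < length xs" "xs = vec (length xs) i j" by auto
      have "x # xs = vec (length (x#xs)) (Suc i) (Suc j)"
        apply (rule nth_equalityI)
         apply simp
        apply (subst ij(3))
        using x0 by (auto simp: nth_Cons split: nat.splits) 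
      then have ?thesis using ij by (intro exI[of _ "Suc i"] exI[of _ "Suc j"]) auto }
    moreover
    { assume x1: "x = 1"
      then have "sum_list xs = 1" using Cons.prems by auto
      then obtain j where j: "j < length xs" "\<forall>k<length xs. xs!k = (if k = j then 1 else 0)" using sum_list1 by blast
      have "x # xs = vec (length (x#xs)) 0 (Suc j)"
        apply (rule nth_equalityI)
        using j x1 by (auto simp: nth_Cons split: nat.splits) 
      then have ?thesis using j by (intro exI[of _ 0] exI[of _ "Suc j"]) auto }
    moreover
    { assume x2: "x = 2"
      then have "sum_list xs = 0" using Cons.prems by auto
      then have "x # xs = vec (length (x#xs)) 0 0"
        using x2 sum_list0 by (intro nth_equalityI) (auto simp: nth_Cons split: nat.splits) 
      then have ?thesis by (intro exI[of _ 0] exI[of _ "0"]) auto }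
    ultimately show ?thesis using x by blast
  qed
qed

lemma vec_props:
  assumes "i \<le> j" "j < length R"
  shows "length (vec (length R) i j) = length R" "sum_list (vec (length R) i j) = 2"
    "eval_exp R (vec (length R) i j) = R!i + R!j"
proof -
  show "length (vec (length R) i j) = length R" by (simp add: vec_def)
  have "sum_list (vec (length R) i j) = (\<Sum>k<length R. (if k = i then 1 else 0) + (if k = j then 1 else 0))"
    by (simp add: vec_def sum_list_sum_nth lessThan_atLeast0)
  also have "\<dots> = 2" using assms by (simp add: sum.distrib)
  finally show "sum_list (vec (length R) i j) = 2" .
  have "eval_exp R (vec (length R) i j) = (\<Sum>k<length R. repeat_mset ((if k = i then 1 else 0) + (if k = j then 1 else 0)) (R!k))"
    by (simp add: eval_exp_nth vec_def)
  also have "\<dots> = (\<Sum>k<length R. (if k = i then R!k else {#}) + (if k = j then R!k else {#}))"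
    by (rule sum.cong) (auto simp: repeat_mset_distrib)
  also have "\<dots> = (\<Sum>k<length R. (if k = i then R!k else {#})) + (\<Sum>k<length R. (if k = j then R!k else {#}))"
    by (rule sum.distrib)
  also have "\<dots> = R!i + R!j" using assms by (simp add: sum.delta)
  finally show "eval_exp R (vec (length R) i j) = R!i + R!j" .
qed

lemma expressions_PP: "expressions R M = (\<lambda>(i,j). vec (length R) i j) ` PP R M"
proof
  show "expressions R M \<subseteq> (\<lambda>(i,j). vec (length R) i j) ` PP R M"
  proof
    fix a assume a: "a \<in> expressions R M"
    then obtain i j where ij: "i \<le> j" "j < length R" "a = vec (length R) i j"
      using sum_list2[of a] unfolding expressions_def by auto
    then have "(i,j) \<in> PP R M" using a vec_props[OF ij(1,2)] unfolding expressions_def PP_def by auto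
    then show "a \<in> (\<lambda>(i,j). vec (length R) i j) ` PP R M" using ij by force
  qed
next
  show "(\<lambda>(i,j). vec (length R) i j) ` PP R M \<subseteq> expressions R M"
    using vec_props unfolding expressions_def PP_def by auto
qed

lemma lexordp_nthI:
  assumes "length (xs::nat list) = length ys" "t < length xs" "\<forall>k<t. xs!k = ys!k" "xs!t < ys!t"
  shows "ord_class.lexordp xs ys"
proof -
  have "take t xs = take t ys" using assms by (intro nth_equalityI) auto
  moreover have "xs = take t xs @ xs!t # drop (Suc t) xs" "ys = take t ys @ ys!t # drop (Suc t) ys"
    using assms by (auto simp: id_take_nth_drop)
  ultimately show ?thesis using assms(4) lexordp_append_left_rightI by metis
qed

lemma vec_lex:
  assumes "i \<le> j" "j < q" "i' \<le> j'" "j' < q" "(i',j') < (i,j)"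
  shows "ord_class.lexordp (vec q i j) (vec q i' j')"
proof (cases "i' < i")
  case True
  show ?thesis
    by (rule lexordp_nthI[where t=i']) (use assms True in \<open>auto simp: vec_def\<close>)
next
  case False
  then have "i' = i" "j' < j" using assms(5) by (auto simp: less_prod_def)
  show ?thesis
    by (rule lexordp_nthI[where t=j']) (use assms \<open>i' = i\<close> \<open>j' < j\<close> in \<open>auto simp: vec_def\<close>)
qed

lemma PP_finite: "finite (PP R M)"
proof -
  have "PP R M \<subseteq> {..<length R} \<times> {..<length R}" unfolding PP_def by auto
  then show ?thesis by (rule finite_subset) auto
qed

lemma PP_mem: "(i,j) \<in> PP R M \<Longrightarrow> i \<le> j \<and> j < length R \<and> R!i + R!j = M"
  unfolding PP_def by auto

lemma lex_asym: "ord_class.lexordp (xs::nat list) ys \<Longrightarrow> ord_class.lexordp ys xs \<Longrightarrow> False"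
  using lexordp_antisym lexordp_irreflexive' by metis

lemma max_expr:
  assumes "PP R M \<noteq> {}"
  shows "max_expression R M = (case Min (PP R M) of (i,j) \<Rightarrow> vec (length R) i j)"
proof -
  define f where "f = (\<lambda>(i,j). vec (length R) i j)"
  define m where "m = Min (PP R M)"
  have mP: "m \<in> PP R M" unfolding m_def using assms PP_finite by (rule Min_in[rotated])
  have mle: "p \<in> PP R M \<Longrightarrow> m \<le> p" for p unfolding m_def using PP_finite by simp
  have lt: "p \<in> PP R M \<Longrightarrow> p' \<in> PP R M \<Longrightarrow> p' < p \<Longrightarrow> ord_class.lexordp (f p) (f p')" for p p'
    using vec_lex[of "fst p" "snd p" "length R" "fst p'" "snd p'"] unfolding f_def
    by (cases p; cases p') (auto dest: PP_mem)
  have E: "expressions R M = f ` PP R M" unfolding f_def by (rule expressions_PP)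
  have "(THE a. a \<in> expressions R M \<and> (\<forall>b \<in> expressions R M. b = a \<or> ord_class.lexordp b a)) = f m"
  proof (rule the_equality)
    show "f m \<in> expressions R M \<and> (\<forall>b \<in> expressions R M. b = f m \<or> ord_class.lexordp b (f m))"
    proof
      show "f m \<in> expressions R M" using E mP by auto
      show "\<forall>b \<in> expressions R M. b = f m \<or> ord_class.lexordp b (f m)"
      proof
        fix b assume "b \<in> expressions R M"
        then obtain p where p: "p \<in> PP R M" "b = f p" using E by auto
        then show "b = f m \<or> ord_class.lexordp b (f m)"
          using mle[OF p(1)] lt[OF p(1) mP] by (cases "p = m") auto
      qed
    qed
  next
    fix a assume a: "a \<in> expressions R M \<and> (\<forall>b \<in> expressions R M. b = a \<or> ord_class.lexordp b a)"
    then obtain p where p: "p \<in> PP R M" "a = f p" using E by auto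
    have "f m = a \<or> ord_class.lexordp (f m) a" using a E mP by auto
    then show "a = f m"
    proof
      assume l: "ord_class.lexordp (f m) a"
      have "m \<noteq> p" using l p lexordp_irreflexive' by metis
      then have "m < p" using mle[OF p(1)] by simp
      then show ?thesis using lt[OF p(1) mP] l p lex_asym by blast
    qed simp
  qed
  then show ?thesis unfolding max_expression_def f_def m_def by simp
qed

lemma F2_PP: "M \<in> F2 m \<Longrightarrow> PP (rooted m) M \<noteq> {}"
proof -
  assume "M \<in> F2 m"
  then obtain a b where ab: "a \<in> set (rooted m)" "b \<in> set (rooted m)" "M = a + b" unfolding F2_def by auto
  then obtain i j where ij: "i < length (rooted m)" "j < length (rooted m)" "a = rooted m ! i" "b = rooted m ! j"
    by (auto simp: in_set_conv_nth)
  show ?thesis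
  proof (cases "i \<le> j")
    case True then have "(i,j) \<in> PP (rooted m) M" using ij ab unfolding PP_def by auto
    then show ?thesis by auto
  next
    case False then have "(j,i) \<in> PP (rooted m) M" using ij ab unfolding PP_def by (auto simp: add.commute)
    then show ?thesis by auto
  qed
qed

lemma R_greater_iff:
  "R_greater m M N \<longleftrightarrow> M \<in> F2 m \<and> N \<in> F2 m \<and> Min (PP (rooted m) M) < Min (PP (rooted m) N)"
proof (cases "M \<in> F2 m \<and> N \<in> F2 m")
  case True
  define R where "R = rooted m"
  define f where "f = (\<lambda>(i,j). vec (length R) i j)"
  have ne: "PP R M \<noteq> {}" "PP R N \<noteq> {}" using True F2_PP unfolding R_def by auto
  define pM where "pM = Min (PP R M)"
  define pN where "pN = Min (PP R N)"
  have mem: "pM \<in> PP R M" "pN \<in> PP R N" unfolding pM_def pN_def using ne PP_finite by (auto intro: Min_in)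
  have lt: "p \<in> PP R A \<Longrightarrow> p' \<in> PP R B \<Longrightarrow> p' < p \<Longrightarrow> ord_class.lexordp (f p) (f p')" for p p' A B
    using vec_lex[of "fst p" "snd p" "length R" "fst p'" "snd p'"] unfolding f_def
    by (cases p; cases p') (auto dest: PP_mem)
  have me: "max_expression R M = f pM" "max_expression R N = f pN"
    using max_expr[OF ne(1)] max_expr[OF ne(2)] unfolding f_def pM_def pN_def by auto
  have "ord_class.lexordp (f pN) (f pM) \<longleftrightarrow> pM < pN"
  proof
    assume l: "ord_class.lexordp (f pN) (f pM)"
    show "pM < pN"
    proof (rule ccontr)
      assume "\<not> pM < pN"
      then have "pN = pM \<or> pN < pM" by auto
      then show False using l lexordp_irreflexive' lt[OF mem(1) mem(2)] lex_asym by metis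
    qed
  qed (rule lt[OF mem(2) mem(1)])
  then show ?thesis using True me unfolding R_greater_def R_def pM_def pN_def by simp
next
  case False then show ?thesis unfolding R_greater_def by auto
qed

lemma rooted_rec: "m \<ge> 5 \<Longrightarrow> rooted m = map (\<lambda>u. add_mset (m - 1) u) (rooted (m - 2))
        @ map (\<lambda>v. add_mset m (add_mset (m - 2) v)) (rooted (m - 3))"
proof -
  assume "m \<ge> 5"
  then have k: "m = Suc (Suc (Suc (Suc (Suc (m-5)))))" by simp
  define k where "k = m - 5"
  have "rooted (Suc (Suc (Suc (Suc (Suc k))))) = map (\<lambda>u. add_mset (4 + k) u) (rooted (3 + k))
        @ map (\<lambda>v. add_mset (5 + k) (add_mset (3 + k) v)) (rooted (2 + k))"
    by (simp add: Let_def)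
  moreover have "m - 1 = 4 + k" "m - 2 = 3 + k" "m - 3 = 2 + k" "m = 5 + k" using k unfolding k_def by arith+
  ultimately show ?thesis using k unfolding k_def by metis
qed

lemma rooted_vars: "w \<in> set (rooted m) \<Longrightarrow> x \<in># w \<Longrightarrow> x \<le> m"
proof (induction m arbitrary: w rule: less_induct)
  case (less m)
  show ?case
  proof (cases "m \<ge> 5")
    case True
    then have "w \<in> set (map (\<lambda>u. add_mset (m - 1) u) (rooted (m - 2))) \<or>
               w \<in> set (map (\<lambda>v. add_mset m (add_mset (m - 2) v)) (rooted (m - 3)))"
      using less.prems(1) rooted_rec by auto
    then show ?thesis
    proof
      assume "w \<in> set (map (\<lambda>u. add_mset (m - 1) u) (rooted (m - 2)))"
      then obtain u where "u \<in> set (rooted (m-2))" "w = add_mset (m-1) u" by auto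
      then show ?thesis using less.IH[of "m-2" u] less.prems True by auto
    next
      assume "w \<in> set (map (\<lambda>v. add_mset m (add_mset (m - 2) v)) (rooted (m - 3)))"
      then obtain u where "u \<in> set (rooted (m-3))" "w = add_mset m (add_mset (m-2) u)" by auto
      then show ?thesis using less.IH[of "m-3" u] less.prems True by auto
    qed
  next
    case False
    then have "m = 0 \<or> m = 1 \<or> m = 2 \<or> m = 3 \<or> m = 4" by auto
    then show ?thesis using less.prems by (auto simp: numeral_eq_Suc)
  qed
qed

lemma rooted_cnt: "w \<in> set (rooted m) \<Longrightarrow> m < c \<Longrightarrow> count w c = 0"
  using rooted_vars[of w m c] by (meson count_inI leD)

lemma rooted_split: "m \<ge> 4 \<Longrightarrow> \<exists>T. rooted m = map (add_mset (m-1)) (rooted (m-2)) @ T \<and> (\<forall>t\<in>set T. m \<in># t \<and> m-1 \<notin># t)"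
proof -
  assume m: "m \<ge> 4"
  show ?thesis
  proof (cases "m = 4")
    case True
    then show ?thesis by (intro exI[of _ "[{#2,4#}]"]) (simp add: numeral_eq_Suc)
  next
    case False
    then have m5: "m \<ge> 5" using m by auto
    have "\<forall>t\<in>set (map (\<lambda>v. add_mset m (add_mset (m - 2) v)) (rooted (m - 3))). m \<in># t \<and> m-1 \<notin># t"
    proof
      fix t assume "t \<in> set (map (\<lambda>v. add_mset m (add_mset (m - 2) v)) (rooted (m - 3)))"
      then obtain v where v: "v \<in> set (rooted (m-3))" "t = add_mset m (add_mset (m - 2) v)" by auto
      have "m - 1 \<notin># v" using rooted_vars[OF v(1), of "m-1"] m5 by auto
      then show "m \<in># t \<and> m-1 \<notin># t" using v m5 by auto
    qed
    then show ?thesis using rooted_rec[OF m5] by blast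
  qed
qed

lemma main_PP:
  assumes n: "n \<ge> 7" and w1: "w1 \<in> set (rooted (n-4))" and w2: "w2 \<in> set (rooted (n-5))"
    and X: "X = add_mset (n-3) w1 + add_mset (n-2) (add_mset (n-4) w2)"
  shows "PP (rooted n) (add_mset (n-1) (add_mset n X)) =
         (\<lambda>(i,j). (i, j + length (rooted (n-5)))) ` PP (rooted (n-2)) X"
proof -
  define Rn where "Rn = rooted n"
  define R0 where "R0 = rooted (n-2)"
  define R3 where "R3 = rooted (n-3)"
  define R4 where "R4 = rooted (n-4)"
  define R5 where "R5 = rooted (n-5)"
  define p where "p = length R4"
  define L5 where "L5 = length R5"
  define q where "q = length R0"
  define M where "M = add_mset (n-1) (add_mset n X)"
  have Rn: "Rn = map (add_mset (n-1)) R0 @ map (\<lambda>v. add_mset n (add_mset (n-2) v)) R3"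
    unfolding Rn_def R0_def R3_def using rooted_rec[of n] n by simp
  have R0: "R0 = map (add_mset (n-3)) R4 @ map (\<lambda>v. add_mset (n-2) (add_mset (n-4) v)) R5"
    unfolding R0_def R4_def R5_def using rooted_rec[of "n-2"] n
    by (simp add: numeral_eq_Suc)
  obtain T3 where R3: "R3 = map (add_mset (n-4)) R5 @ T3" and T3: "\<forall>t\<in>set T3. n-3 \<in># t \<and> n-4 \<notin># t"
  proof -
    have e: "n-3 \<ge> 4" "n-3-1 = n-4" "n-3-2 = n-5" using n by arith+
    show ?thesis using rooted_split[OF e(1)] that unfolding e(2,3) R3_def R5_def by blast
  qed
  have q: "q = p + L5" unfolding q_def p_def L5_def R0 by simp
  have lenRn: "length Rn = q + length R3" unfolding Rn q_def by simp
  have lenR3: "L5 \<le> length R3" unfolding R3 L5_def by simp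
  have Rn_lo: "i < q \<Longrightarrow> Rn!i = add_mset (n-1) (R0!i)" for i unfolding Rn q_def by (simp add: nth_append)
  have Rn_hi: "k < length R3 \<Longrightarrow> Rn!(q+k) = add_mset n (add_mset (n-2) (R3!k))" for k
    unfolding Rn q_def by (simp add: nth_append)
  have R0_lo: "i < p \<Longrightarrow> R0!i = add_mset (n-3) (R4!i)" for i unfolding R0 p_def by (simp add: nth_append)
  have R0_hi: "k < L5 \<Longrightarrow> R0!(p+k) = add_mset (n-2) (add_mset (n-4) (R5!k))" for k
    unfolding R0 p_def L5_def by (simp add: nth_append)
  have R3_lo: "k < L5 \<Longrightarrow> R3!k = add_mset (n-4) (R5!k)" for k unfolding R3 L5_def by (simp add: nth_append)
  have R3_hi: "L5 \<le> k \<Longrightarrow> k < length R3 \<Longrightarrow> n-3 \<in># R3!k" for k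
    unfolding R3 L5_def using T3 by (auto simp: nth_append)
  have c0: "i < length R0 \<Longrightarrow> count (R0!i) c = 0" if "n - 2 < c" for i c
    using rooted_cnt[of "R0!i" "n-2" c] that unfolding R0_def by auto
  have c3: "i < length R3 \<Longrightarrow> count (R3!i) c = 0" if "n - 3 < c" for i c
    using rooted_cnt[of "R3!i" "n-3" c] that unfolding R3_def by auto
  have c4: "i < length R4 \<Longrightarrow> count (R4!i) c = 0" if "n - 4 < c" for i c
    using rooted_cnt[of "R4!i" "n-4" c] that unfolding R4_def by auto
  have c5: "i < length R5 \<Longrightarrow> count (R5!i) c = 0" if "n - 5 < c" for i c
    using rooted_cnt[of "R5!i" "n-5" c] that unfolding R5_def by auto
  have cw1: "n - 4 < c \<Longrightarrow> count w1 c = 0" for c using rooted_cnt[OF w1] by auto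
  have cw2: "n - 5 < c \<Longrightarrow> count w2 c = 0" for c using rooted_cnt[OF w2] by auto
  have X1: "count X (n-1) = 0" "count X n = 0" "count X (n-2) = 1" "count X (n-3) = 1"
    unfolding X using n cw1 cw2 by auto
  have M1: "count M (n-1) = 1" "count M n = 1" unfolding M_def using X1 n by auto
  show ?thesis
    unfolding M_def[symmetric] Rn_def[symmetric] R0_def[symmetric] R5_def[symmetric] L5_def[symmetric]
  proof
    show "PP Rn M \<subseteq> (\<lambda>(i,j). (i, j + L5)) ` PP R0 X"
    proof
      fix ij assume "ij \<in> PP Rn M"
      then obtain i j where ij: "ij = (i,j)" "i \<le> j" "j < length Rn" "Rn!i + Rn!j = M"
        unfolding PP_def by auto
      have jq: "q \<le> j"
      proof (rule ccontr)
        assume "\<not> q \<le> j"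
        then have "count (Rn!i + Rn!j) (n-1) \<ge> 2" using Rn_lo[of i] Rn_lo[of j] ij by auto
        then show False using ij M1 by simp
      qed
      have iq: "i < q"
      proof (rule ccontr)
        assume "\<not> i < q"
        then have "count (Rn!i + Rn!j) n \<ge> 2" using Rn_hi[of "i-q"] Rn_hi[of "j-q"] ij lenRn by auto
        then show False using ij M1 by simp
      qed
      define k where "k = j - q"
      have jk: "j = q + k" "k < length R3" using jq ij lenRn unfolding k_def by auto
      have eq: "R0!i + add_mset (n-2) (R3!k) = X"
        using ij(4) Rn_lo[OF iq] Rn_hi[OF jk(2)] jk(1) unfolding M_def by simp
      have ip: "i < p"
      proof (rule ccontr)
        assume "\<not> i < p"
        then have "count (R0!i + add_mset (n-2) (R3!k)) (n-2) \<ge> 2"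
          using R0_hi[of "i-p"] iq q by auto
        then show False using arg_cong[OF eq, of "\<lambda>w. count w (n-2)"] X1 by linarith
      qed
      have kL: "k < L5"
      proof (rule ccontr)
        assume "\<not> k < L5"
        then have "n-3 \<in># R3!k" using R3_hi jk by auto
        then have "count (R0!i + add_mset (n-2) (R3!k)) (n-3) \<ge> 2"
          using R0_lo[OF ip] n by (auto simp: Suc_le_eq)
        then show False using arg_cong[OF eq, of "\<lambda>w. count w (n-3)"] X1 by linarith
      qed
      have "(i, p+k) \<in> PP R0 X"
        unfolding PP_def using ip kL q eq R0_hi[OF kL] R3_lo[OF kL] by (auto simp: q_def)
      moreover have "ij = (\<lambda>(i,j). (i, j + L5)) (i, p+k)" using ij jk q by simp
      ultimately show "ij \<in> (\<lambda>(i,j). (i, j + L5)) ` PP R0 X" by blast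
    qed
  next
    show "(\<lambda>(i,j). (i, j + L5)) ` PP R0 X \<subseteq> PP Rn M"
    proof
      fix ij assume "ij \<in> (\<lambda>(i,j). (i, j + L5)) ` PP R0 X"
      then obtain i j where ij: "ij = (i, j + L5)" "i \<le> j" "j < q" "R0!i + R0!j = X"
        unfolding PP_def q_def by auto
      have ip: "i < p"
      proof (rule ccontr)
        assume "\<not> i < p"
        then have "count (R0!i + R0!j) (n-2) \<ge> 2" using R0_hi[of "i-p"] R0_hi[of "j-p"] ij q by auto
        then show False using ij X1 by simp
      qed
      have jp: "p \<le> j"
      proof (rule ccontr)
        assume "\<not> p \<le> j"
        then have "count (R0!i + R0!j) (n-2) = 0" using R0_lo[of i] R0_lo[of j] ij c4 p_def n by auto
        then show False using ij X1 by simp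
      qed
      define k where "k = j - p"
      have jk: "j = p + k" "k < L5" using jp ij q unfolding k_def by auto
      have "Rn!i + Rn!(q+k) = M"
        using Rn_lo[of i] Rn_hi[of k] R0_hi[OF jk(2)] R3_lo[OF jk(2)] lenR3 jk ij ip q unfolding M_def by auto
      then have "(i, q+k) \<in> PP Rn M" unfolding PP_def using ip jk q lenRn lenR3 by auto
      moreover have "ij = (i, q+k)" using ij jk q by simp
      ultimately show "ij \<in> PP Rn M" by simp
    qed
  qed
qed

lemma A_struct:
  assumes n: "n \<ge> 7" and A: "add_mset (n - 1) u \<in> set (A_list n)"
  shows "\<exists>w1\<in>set (rooted (n-4)). u = add_mset (n-3) w1"
proof -
  have mem: "add_mset (n - 1) u \<in> set (rooted n)" and sub: "{#n - 1, n - 3#} \<subseteq># add_mset (n - 1) u"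
    using A unfolding A_list_def by auto
  have "n - 3 \<in># add_mset (n - 1) u" using mset_subset_eqD[OF sub] by simp
  then have u3: "n - 3 \<in># u" using n by auto
  have "add_mset (n - 1) u \<in> set (map (add_mset (n-1)) (rooted (n-2))) \<or>
        add_mset (n - 1) u \<in> set (map (\<lambda>v. add_mset n (add_mset (n-2) v)) (rooted (n-3)))"
    using mem rooted_rec[of n] n by auto
  then have u0: "u \<in> set (rooted (n-2))"
  proof
    assume "add_mset (n - 1) u \<in> set (map (\<lambda>v. add_mset n (add_mset (n-2) v)) (rooted (n-3)))"
    then obtain b where b: "b \<in> set (rooted (n-3))" "add_mset (n - 1) u = add_mset n (add_mset (n-2) b)" by auto
    have "count b (n-1) = 0" using rooted_cnt[OF b(1)] n by auto
    then have "count (add_mset n (add_mset (n-2) b)) (n-1) = 0" using n by auto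
    then show ?thesis using arg_cong[OF b(2), of "\<lambda>w. count w (n-1)"] by simp
  qed auto
  have e: "n-2 \<ge> 4" "n-2-1 = n-3" "n-2-2 = n-4" using n by arith+
  obtain T where T: "rooted (n-2) = map (add_mset (n-3)) (rooted (n-4)) @ T" "\<forall>t\<in>set T. n-2 \<in># t \<and> n-3 \<notin># t"
    using rooted_split[OF e(1)] unfolding e(2,3) by blast
  show ?thesis using u0 u3 T by auto
qed

lemma C_struct:
  assumes n: "n \<ge> 7" and C: "add_mset n v \<in> set (C_list n)"
  shows "\<exists>w2\<in>set (rooted (n-5)). v = add_mset (n-2) (add_mset (n-4) w2)"
proof -
  have mem: "add_mset n v \<in> set (rooted n)" and sub: "{#n, n - 4#} \<subseteq># add_mset n v"
    using C unfolding C_list_def by auto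
  have "n - 4 \<in># add_mset n v" using mset_subset_eqD[OF sub] by simp
  then have v4: "n - 4 \<in># v" using n by auto
  have "add_mset n v \<in> set (map (add_mset (n-1)) (rooted (n-2))) \<or>
        add_mset n v \<in> set (map (\<lambda>v. add_mset n (add_mset (n-2) v)) (rooted (n-3)))"
    using mem rooted_rec[of n] n by auto
  then obtain b where b: "b \<in> set (rooted (n-3))" "v = add_mset (n-2) b"
  proof
    assume "add_mset n v \<in> set (map (add_mset (n-1)) (rooted (n-2)))"
    then obtain a where a: "a \<in> set (rooted (n-2))" "add_mset n v = add_mset (n-1) a" by auto
    have "count a n = 0" using rooted_cnt[OF a(1)] n by auto
    then have "count (add_mset (n-1) a) n = 0" using n by auto
    then show ?thesis using arg_cong[OF a(2), of "\<lambda>w. count w n"] by simp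
  qed auto
  have b4: "n - 4 \<in># b" using v4 b(2) n by auto
  have e: "n-3 \<ge> 4" "n-3-1 = n-4" "n-3-2 = n-5" using n by arith+
  obtain T where T: "rooted (n-3) = map (add_mset (n-4)) (rooted (n-5)) @ T" "\<forall>t\<in>set T. n-3 \<in># t \<and> n-4 \<notin># t"
    using rooted_split[OF e(1)] unfolding e(2,3) by blast
  show ?thesis using b b4 T by auto
qed

theorem lemma3p13:
  fixes n :: nat and u u' v v' :: monomial
  assumes "n \<ge> 7"
    and "add_mset (n - 1) u \<in> set (A_list n)"
    and "add_mset (n - 1) u' \<in> set (A_list n)"
    and "add_mset n v \<in> set (C_list n)"
    and "add_mset n v' \<in> set (C_list n)"
    and "R_greater (n - 2) (u + v) (u' + v')"
  shows "R_greater n (add_mset (n - 1) (add_mset n (u + v)))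
                     (add_mset (n - 1) (add_mset n (u' + v')))"
proof -
  note n = assms(1)
  obtain w1 where w1: "w1 \<in> set (rooted (n-4))" "u = add_mset (n-3) w1" using A_struct[OF n assms(2)] by blast
  obtain w1' where w1': "w1' \<in> set (rooted (n-4))" "u' = add_mset (n-3) w1'" using A_struct[OF n assms(3)] by blast
  obtain w2 where w2: "w2 \<in> set (rooted (n-5))" "v = add_mset (n-2) (add_mset (n-4) w2)" using C_struct[OF n assms(4)] by blast
  obtain w2' where w2': "w2' \<in> set (rooted (n-5))" "v' = add_mset (n-2) (add_mset (n-4) w2')" using C_struct[OF n assms(5)] by blast
  define L where "L = length (rooted (n-5))"
  define \<psi> :: "nat \<times> nat \<Rightarrow> nat \<times> nat" where "\<psi> = (\<lambda>(i,j). (i, j + L))"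
  have P1: "PP (rooted n) (add_mset (n - 1) (add_mset n (u + v))) = \<psi> ` PP (rooted (n-2)) (u+v)"
    using main_PP[OF n w1(1) w2(1), of "u+v"] w1 w2 unfolding \<psi>_def L_def by simp
  have P2: "PP (rooted n) (add_mset (n - 1) (add_mset n (u' + v'))) = \<psi> ` PP (rooted (n-2)) (u'+v')"
    using main_PP[OF n w1'(1) w2'(1), of "u'+v'"] w1' w2' unfolding \<psi>_def L_def by simp
  have hyp: "u + v \<in> F2 (n-2)" "u' + v' \<in> F2 (n-2)"
    "Min (PP (rooted (n-2)) (u+v)) < Min (PP (rooted (n-2)) (u'+v'))"
    using assms(6) unfolding R_greater_iff by auto
  have F: "add_mset (n - 1) (add_mset n (a + b)) \<in> F2 n"
    if "add_mset (n - 1) a \<in> set (A_list n)" "add_mset n b \<in> set (C_list n)" for a b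
  proof -
    have "add_mset (n - 1) a \<in> set (rooted n)" "add_mset n b \<in> set (rooted n)"
      using that unfolding A_list_def C_list_def by auto
    moreover have "add_mset (n - 1) (add_mset n (a + b)) = add_mset (n - 1) a + add_mset n b" by simp
    ultimately show ?thesis unfolding F2_def by blast
  qed
  have mono: "mono \<psi>" unfolding \<psi>_def by (rule monoI) (auto simp: less_eq_prod_def)
  have Min1: "Min (\<psi> ` PP (rooted (n-2)) (u+v)) = \<psi> (Min (PP (rooted (n-2)) (u+v)))"
    using mono_Min_commute[OF mono PP_finite F2_PP[OF hyp(1)]] by simp
  have Min2: "Min (\<psi> ` PP (rooted (n-2)) (u'+v')) = \<psi> (Min (PP (rooted (n-2)) (u'+v')))"
    using mono_Min_commute[OF mono PP_finite F2_PP[OF hyp(2)]] by simp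
  have lt: "a < b \<Longrightarrow> \<psi> a < \<psi> b" for a b unfolding \<psi>_def by (cases a; cases b) (auto simp: less_prod_def)
  show ?thesis unfolding R_greater_iff P1 P2 Min1 Min2
    using F[OF assms(2) assms(4)] F[OF assms(3) assms(5)] lt[OF hyp(3)] by simp
qed

end
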